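(* Let $\mathcal{P}=(V,\le)$ be a finite IIC poset and $G_{\mathcal{P}}$ its predecessors-successors bipartite graph. Then every biclique of $G_{\mathcal{P}}$ is equal to $X_v\cup Y_v$ for some $v\in V$.
   Context: All graphs are finite and simple. A biclique of a graph $G$ is a set $P\subseteq V(G)$ such that the induced subgraph $G[P]$ is a complete bipartite graph with both parts nonempty, and $P$ is inclusion-maximal with this property. For a poset $\mathcal{P}=(V,\le)$ and $x\in V$, $I^-_{\mathcal{P}}(x)=\{y\in V: y\le x\}$ and $I^+_{\mathcal{P}}(x)=\{y\in V: x\le y\}$. $\mathcal{P}$ is interval intersection closed (IIC) if for all $u,v\in V$: whenever $I^-_{\mathcal{P}}(u)\cap I^-_{\mathcal{P}}(v)\neq\emptyset$ there is $w\in V$ with $I^-_{\mathcal{P}}(w)=I^-_{\mathcal{P}}(u)\cap I^-_{\mathcal{P}}(v)$, and whenever $I^+_{\mathcal{P}}(u)\cap I^+_{\mathcal{P}}(v)\neq\emptyset$ there is $w\in V$ with $I^+_{\mathcal{P}}(w)=I^+_{\mathcal{P}}(u)\cap I^+_{\mathcal{P}}(v)$. The predecessors-successors bipartite graph $G_{\mathcal{P}}=(A\cup B,E)$ has $A=\{a_v: v\in V\}$, $B=\{b_v:v\in V\}$ (two disjoint copies of $V$) and $E=\{a_ub_v: u,v\in V,\ u\le v\}$. For $v\in V$, $X_v=\{a_u: u\in I^-_{\mathcal{P}}(v)\}$ and $Y_v=\{b_w: w\in I^+_{\mathcal{P}}(v)\}$. *)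

theory Defs
  imports Main
begin

definition poset_on :: "'a set \<Rightarrow> ('a \<Rightarrow> 'a \<Rightarrow> bool) \<Rightarrow> bool" where
  "poset_on V le \<longleftrightarrow>
     (\<forall>x\<in>V. le x x) \<and>
     (\<forall>x\<in>V. \<forall>y\<in>V. le x y \<and> le y x \<longrightarrow> x = y) \<and>
     (\<forall>x\<in>V. \<forall>y\<in>V. \<forall>z\<in>V. le x y \<and> le y z \<longrightarrow> le x z)"

definition down_int :: "'a set \<Rightarrow> ('a \<Rightarrow> 'a \<Rightarrow> bool) \<Rightarrow> 'a \<Rightarrow> 'a set" where
  "down_int V le x = {y\<in>V. le y x}"

definition up_int :: "'a set \<Rightarrow> ('a \<Rightarrow> 'a \<Rightarrow> bool) \<Rightarrow> 'a \<Rightarrow> 'a set" where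
  "up_int V le x = {y\<in>V. le x y}"

definition IIC :: "'a set \<Rightarrow> ('a \<Rightarrow> 'a \<Rightarrow> bool) \<Rightarrow> bool" where
  "IIC V le \<longleftrightarrow>
     (\<forall>u\<in>V. \<forall>v\<in>V.
        (down_int V le u \<inter> down_int V le v \<noteq> {} \<longrightarrow>
           (\<exists>w\<in>V. down_int V le w = down_int V le u \<inter> down_int V le v)) \<and>
        (up_int V le u \<inter> up_int V le v \<noteq> {} \<longrightarrow>
           (\<exists>w\<in>V. up_int V le w = up_int V le u \<inter> up_int V le v)))"

definition induces_complete_bipartite ::
  "'v set \<Rightarrow> ('v \<Rightarrow> 'v \<Rightarrow> bool) \<Rightarrow> 'v set \<Rightarrow> bool" where
  "induces_complete_bipartite VG adj P \<longleftrightarrow> P \<subseteq> VG \<and>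
     (\<exists>S T. S \<noteq> {} \<and> T \<noteq> {} \<and> S \<inter> T = {} \<and> S \<union> T = P \<and>
        (\<forall>s\<in>S. \<forall>t\<in>T. adj s t) \<and>
        (\<forall>s\<in>S. \<forall>s'\<in>S. \<not> adj s s') \<and>
        (\<forall>t\<in>T. \<forall>t'\<in>T. \<not> adj t t'))"

definition biclique :: "'v set \<Rightarrow> ('v \<Rightarrow> 'v \<Rightarrow> bool) \<Rightarrow> 'v set \<Rightarrow> bool" where
  "biclique VG adj P \<longleftrightarrow> induces_complete_bipartite VG adj P \<and>
     (\<forall>Q. P \<subset> Q \<longrightarrow> \<not> induces_complete_bipartite VG adj Q)"

text \<open>Predecessors-successors bipartite graph: vertex a_v is Inl v, b_v is Inr v.\<close>
definition ps_vertices :: "'a set \<Rightarrow> ('a + 'a) set" where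
  "ps_vertices V = Inl ` V \<union> Inr ` V"

definition ps_adj :: "'a set \<Rightarrow> ('a \<Rightarrow> 'a \<Rightarrow> bool) \<Rightarrow> 'a + 'a \<Rightarrow> 'a + 'a \<Rightarrow> bool" where
  "ps_adj V le x y \<longleftrightarrow> (\<exists>u\<in>V. \<exists>v\<in>V. le u v \<and>
      ((x = Inl u \<and> y = Inr v) \<or> (x = Inr v \<and> y = Inl u)))"

definition X_set :: "'a set \<Rightarrow> ('a \<Rightarrow> 'a \<Rightarrow> bool) \<Rightarrow> 'a \<Rightarrow> ('a + 'a) set" where
  "X_set V le v = Inl ` down_int V le v"

definition Y_set :: "'a set \<Rightarrow> ('a \<Rightarrow> 'a \<Rightarrow> bool) \<Rightarrow> 'a \<Rightarrow> ('a + 'a) set" where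
  "Y_set V le v = Inr ` up_int V le v"

end

theory Submission
  imports Defs
begin

lemma icb_struct:
  assumes "induces_complete_bipartite (ps_vertices V) (ps_adj V le) P"
  shows "\<exists>A B. A \<noteq> {} \<and> B \<noteq> {} \<and> A \<subseteq> V \<and> B \<subseteq> V \<and> P = Inl ` A \<union> Inr ` B
           \<and> (\<forall>a\<in>A. \<forall>b\<in>B. le a b)"
proof -
  from assms obtain S T where PV: "P \<subseteq> ps_vertices V" and ST: "S \<noteq> {}" "T \<noteq> {}" "S \<inter> T = {}" "S \<union> T = P"
    and adj: "\<forall>s\<in>S. \<forall>t\<in>T. ps_adj V le s t"
    unfolding induces_complete_bipartite_def by blast
  obtain s0 t0 where s0: "s0 \<in> S" and t0: "t0 \<in> T" using ST by blast
  have L: "\<exists>A B. A \<noteq> {} \<and> B \<noteq> {} \<and> A \<subseteq> V \<and> B \<subseteq> V \<and> X \<union> Y = Inl ` A \<union> Inr ` B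
           \<and> (\<forall>a\<in>A. \<forall>b\<in>B. le a b)"
    if X: "X \<noteq> {}" "Y \<noteq> {}" and adjXY: "\<forall>s\<in>X. \<forall>t\<in>Y. ps_adj V le s t"
       and x0: "x0 \<in> X" and y0: "y0 \<in> Y" and y0r: "\<exists>v. y0 = Inr v" for X Y x0 y0
  proof -
    have Xl: "\<forall>s\<in>X. \<exists>u\<in>V. s = Inl u"
      using adjXY y0 y0r unfolding ps_adj_def by fastforce
    then obtain u0 where u0: "x0 = Inl u0" using x0 by blast
    have Yr: "\<forall>t\<in>Y. \<exists>v\<in>V. t = Inr v"
      using adjXY x0 u0 unfolding ps_adj_def by fastforce
    define A where "A = {u. Inl u \<in> X}"
    define B where "B = {v. Inr v \<in> Y}"
    have "X = Inl ` A" using Xl unfolding A_def by force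
    moreover have "Y = Inr ` B" using Yr unfolding B_def by force
    moreover have "A \<subseteq> V" using Xl unfolding A_def by force
    moreover have "B \<subseteq> V" using Yr unfolding B_def by force
    moreover have "\<forall>a\<in>A. \<forall>b\<in>B. le a b"
      using adjXY unfolding A_def B_def ps_adj_def by fastforce
    ultimately show ?thesis using X by blast
  qed
  show ?thesis
  proof (cases t0)
    case (Inr v)
    then show ?thesis using L[of S T s0 t0] ST adj s0 t0 by auto
  next
    case (Inl u)
    have adj': "\<forall>s\<in>T. \<forall>t\<in>S. ps_adj V le s t"
      using adj unfolding ps_adj_def by blast
    have "\<exists>v. s0 = Inr v"
      using adj s0 t0 Inl unfolding ps_adj_def by auto
    then show ?thesis using L[of T S t0 s0] ST adj' s0 t0 by (auto simp: Un_commute)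
  qed
qed

lemma icb_intro:
  assumes "A \<noteq> {}" "B \<noteq> {}" "A \<subseteq> V" "B \<subseteq> V" "\<forall>a\<in>A. \<forall>b\<in>B. le a b"
  shows "induces_complete_bipartite (ps_vertices V) (ps_adj V le) (Inl ` A \<union> Inr ` B)"
proof -
  have 1: "Inl ` A \<union> Inr ` B \<subseteq> ps_vertices V" using assms unfolding ps_vertices_def by auto
  have 2: "\<forall>s\<in>Inl ` A. \<forall>t\<in>Inr ` B. ps_adj V le s t" using assms unfolding ps_adj_def by blast
  have 3: "\<forall>s\<in>Inl ` A. \<forall>s'\<in>Inl ` A. \<not> ps_adj V le s s'" unfolding ps_adj_def by blast
  have 4: "\<forall>t\<in>Inr ` B. \<forall>t'\<in>Inr ` B. \<not> ps_adj V le t t'" unfolding ps_adj_def by blast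
  have 5: "Inl ` A \<inter> Inr ` B = {}" by blast
  show ?thesis unfolding induces_complete_bipartite_def
    apply (rule conjI[OF 1])
    apply (rule exI[of _ "Inl ` A"], rule exI[of _ "Inr ` B"])
    using assms(1,2) 2 3 4 5 by blast
qed

lemma iic_iter:
  assumes "IIC V le" "finite B" "B \<noteq> {}" "B \<subseteq> V"
    and "(\<Inter>b\<in>B. down_int V le b) \<noteq> {}"
  shows "\<exists>w\<in>V. down_int V le w = (\<Inter>b\<in>B. down_int V le b)"
  using assms(2,3,4,5)
proof (induction B rule: finite_ne_induct)
  case (singleton x) then show ?case by auto
next
  case (insert b B)
  have bV: "b \<in> V" and BV: "B \<subseteq> V" using insert.prems by auto
  have ne: "(\<Inter>b\<in>B. down_int V le b) \<noteq> {}" using insert.prems(2) by auto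
  obtain w' where w': "w' \<in> V" "down_int V le w' = (\<Inter>b\<in>B. down_int V le b)"
    using insert.IH[OF BV ne] by blast
  have eq: "(\<Inter>c\<in>insert b B. down_int V le c) = down_int V le b \<inter> down_int V le w'"
    using w'(2) by simp
  have "down_int V le b \<inter> down_int V le w' \<noteq> {}" using insert.prems(2) eq by simp
  then have "\<exists>w\<in>V. down_int V le w = down_int V le b \<inter> down_int V le w'"
    using assms(1) bV w'(1) unfolding IIC_def by blast
  then show ?case using eq by simp
qed

theorem lemma8:
  fixes V :: "'a set" and le :: "'a \<Rightarrow> 'a \<Rightarrow> bool" and P :: "('a + 'a) set"
  assumes "finite V" and "poset_on V le" and "IIC V le"
    and "biclique (ps_vertices V) (ps_adj V le) P"
  shows "\<exists>v\<in>V. P = X_set V le v \<union> Y_set V le v"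
proof -
  have icb: "induces_complete_bipartite (ps_vertices V) (ps_adj V le) P"
   and max: "\<And>Q. P \<subset> Q \<Longrightarrow> \<not> induces_complete_bipartite (ps_vertices V) (ps_adj V le) Q"
    using assms(4) unfolding biclique_def by blast+
  obtain A B where AB: "A \<noteq> {}" "B \<noteq> {}" "A \<subseteq> V" "B \<subseteq> V" and P: "P = Inl ` A \<union> Inr ` B"
    and le: "\<forall>a\<in>A. \<forall>b\<in>B. le a b" using icb_struct[OF icb] by blast
  have refl: "\<forall>x\<in>V. le x x" and trans: "\<forall>x\<in>V. \<forall>y\<in>V. \<forall>z\<in>V. le x y \<and> le y z \<longrightarrow> le x z"
    using assms(2) unfolding poset_on_def by blast+
  have Aeq: "\<And>x. x \<in> V \<Longrightarrow> \<forall>b\<in>B. le x b \<Longrightarrow> x \<in> A"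
  proof (rule ccontr)
    fix x assume x: "x \<in> V" "\<forall>b\<in>B. le x b" "x \<notin> A"
    have "insert x A \<subseteq> V" using x AB by blast
    moreover have "\<forall>a\<in>insert x A. \<forall>b\<in>B. le a b" using x le by blast
    ultimately have "induces_complete_bipartite (ps_vertices V) (ps_adj V le) (Inl ` insert x A \<union> Inr ` B)"
      using icb_intro[of "insert x A" B V le] AB by blast
    moreover have "P \<subset> Inl ` insert x A \<union> Inr ` B"
    proof (rule psubsetI)
      show "P \<subseteq> Inl ` insert x A \<union> Inr ` B" using P by blast
      have "Inl x \<notin> P" using P x(3) by blast
      then show "P \<noteq> Inl ` insert x A \<union> Inr ` B" by blast
    qed
    ultimately show False using max by blast
  qed
  have Beq: "\<And>y. y \<in> V \<Longrightarrow> \<forall>a\<in>A. le a y \<Longrightarrow> y \<in> B"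
  proof (rule ccontr)
    fix y assume y: "y \<in> V" "\<forall>a\<in>A. le a y" "y \<notin> B"
    have "insert y B \<subseteq> V" using y AB by blast
    moreover have "\<forall>a\<in>A. \<forall>b\<in>insert y B. le a b" using y le by blast
    ultimately have "induces_complete_bipartite (ps_vertices V) (ps_adj V le) (Inl ` A \<union> Inr ` insert y B)"
      using icb_intro[of A "insert y B" V le] AB by blast
    moreover have "P \<subset> Inl ` A \<union> Inr ` insert y B"
    proof (rule psubsetI)
      show "P \<subseteq> Inl ` A \<union> Inr ` insert y B" using P by blast
      have "Inr y \<notin> P" using P y(3) by blast
      then show "P \<noteq> Inl ` A \<union> Inr ` insert y B" by blast
    qed
    ultimately show False using max by blast
  qed
  have Ai: "A = (\<Inter>b\<in>B. down_int V le b)"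
  proof
    show "A \<subseteq> (\<Inter>b\<in>B. down_int V le b)" using le AB(3) unfolding down_int_def by blast
    show "(\<Inter>b\<in>B. down_int V le b) \<subseteq> A"
    proof
      fix x assume "x \<in> (\<Inter>b\<in>B. down_int V le b)"
      then have "x \<in> V" "\<forall>b\<in>B. le x b" using AB(2) unfolding down_int_def by auto
      then show "x \<in> A" using Aeq by blast
    qed
  qed
  have "finite B" using AB(4) assms(1) finite_subset by blast
  moreover have "(\<Inter>b\<in>B. down_int V le b) \<noteq> {}" using Ai AB(1) by simp
  ultimately have "\<exists>w\<in>V. down_int V le w = (\<Inter>b\<in>B. down_int V le b)"
    using iic_iter[OF assms(3) _ AB(2) AB(4)] by blast
  then obtain w where w: "w \<in> V" "down_int V le w = A" using Ai by auto
  have wA: "w \<in> A" using w refl unfolding down_int_def by blast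
  have "B = up_int V le w"
  proof
    show "B \<subseteq> up_int V le w" using wA le AB(4) unfolding up_int_def by blast
    show "up_int V le w \<subseteq> B"
    proof
      fix y assume "y \<in> up_int V le w"
      then have y: "y \<in> V" "le w y" unfolding up_int_def by auto
      have "\<forall>a\<in>A. le a y"
      proof
        fix a assume "a \<in> A"
        then have "le a w" "a \<in> V" using w unfolding down_int_def by auto
        then show "le a y" using trans y w by blast
      qed
      then show "y \<in> B" using Beq y by blast
    qed
  qed
  then have "P = X_set V le w \<union> Y_set V le w" using w P unfolding X_set_def Y_set_def by simp
  then show ?thesis using w(1) by blast
qed

end
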